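(* In the setting described in the context, the computable error estimator $\eta^{(2)}$ satisfies $$|J(u)-J(\tilde u)|-|J(u)-J(u_h^{(2)})|\le|\eta^{(2)}|\le|J(u)-J(\tilde u)|+|J(u)-J(u_h^{(2)})|.$$
   Context: Let $U$ and $V$ be real Banach spaces with dual $V^*$. Let $\mathcal{A}:U\to V^*$ be a (nonlinear) operator that is three times continuously Fréchet differentiable, and let $J:U\to\mathbb{R}$ be three times continuously Fréchet differentiable. Notation: $\mathcal{A}(w)(v)$ is the value of $\mathcal{A}(w)\in V^*$ at $v\in V$. For fixed $v$, $\mathcal{A}'(w)(\varphi,v)$, $\mathcal{A}''(w)(\varphi,\psi,v)$ and $\mathcal{A}'''(w)(\varphi,\psi,\chi,v)$ denote the first, second and third Fréchet derivatives of $w\mapsto\mathcal{A}(w)(v)$ at $w$ in the directions $\varphi,\psi,\chi\in U$. Analogously, $J'(w)(\varphi)$ and $J'''(w)(\varphi,\psi,\chi)$ denote derivatives of $J$. Let $u\in U$ satisfy $\mathcal{A}(u)(v)=0$ for all $v\in V$, and let $z\in V$ satisfy $\mathcal{A}'(u)(\varphi,z)=J'(u)(\varphi)$ for all $\varphi\in U$. Let $U_h^{(2)}\subset U$ and $V_h^{(2)}\subset V$ be finite-dimensional subspaces. Let $u_h^{(2)}\in U_h^{(2)}$ satisfy $\mathcal{A}(u_h^{(2)})(v)=0$ for all $v\in V_h^{(2)}$. Let $z_h^{(2)}\in V_h^{(2)}$ satisfy $\mathcal{A}'(u_h^{(2)})(\varphi,z_h^{(2)})=J'(u_h^{(2)})(\varphi)$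 for all $\varphi\in U_h^{(2)}$. Let $\tilde u\in U_h^{(2)}$ and $\tilde z\in V_h^{(2)}$ be arbitrary fixed elements. Define $\rho(\tilde u)(v):=-\mathcal{A}(\tilde u)(v)$ and $\rho^*(\tilde u,\tilde z)(\varphi):=J'(\tilde u)(\varphi)-\mathcal{A}'(\tilde u)(\varphi,\tilde z)$. With $e^{(2)}:=u_h^{(2)}-\tilde u$ and $e^{(2),*}:=z_h^{(2)}-\tilde z$, define $$\mathcal{R}^{(3)(2)}:=\frac12\int_0^1\Big[J'''(\tilde u+se^{(2)})(e^{(2)},e^{(2)},e^{(2)})-\mathcal{A}'''(\tilde u+se^{(2)})(e^{(2)},e^{(2)},e^{(2)},\tilde z+se^{(2),*})-3\mathcal{A}''(\tilde u+se^{(2)})(e^{(2)},e^{(2)},e^{(2),*})\Big]s(s-1)\,ds,$$ and $$\eta^{(2)}:=\tfrac12\rho(\tilde u)(z_h^{(2)}-\tilde z)+\tfrac12\rho^*(\tilde u,\tilde z)(u_h^{(2)}-\tilde u)+\rho(\tilde u)(\tilde z)+\mathcal{R}^{(3)(2)}.$$ *)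

theory Defs
  imports "HOL-Analysis.Analysis"
begin

text \<open>F is three times continuously Frechet differentiable on the whole space, with
  first, second and third derivatives F1, F2, F3 (multilinear maps represented as
  iterated bounded linear functions, F1 w phi = F'(w)(phi), etc.).\<close>
definition C3_with_derivs ::
  "('a::real_normed_vector \<Rightarrow> 'b::real_normed_vector) \<Rightarrow> ('a \<Rightarrow> ('a \<Rightarrow>\<^sub>L 'b))
   \<Rightarrow> ('a \<Rightarrow> ('a \<Rightarrow>\<^sub>L 'a \<Rightarrow>\<^sub>L 'b)) \<Rightarrow> ('a \<Rightarrow> ('a \<Rightarrow>\<^sub>L 'a \<Rightarrow>\<^sub>L 'a \<Rightarrow>\<^sub>L 'b)) \<Rightarrow> bool"
  where "C3_with_derivs F F1 F2 F3 \<longleftrightarrow>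
    (\<forall>w. (F has_derivative blinfun_apply (F1 w)) (at w)) \<and>
    (\<forall>w. (F1 has_derivative blinfun_apply (F2 w)) (at w)) \<and>
    (\<forall>w. (F2 has_derivative blinfun_apply (F3 w)) (at w)) \<and>
    continuous_on UNIV F3"

definition fin_dim_subspace :: "'a::real_vector set \<Rightarrow> bool"
  where "fin_dim_subspace S \<longleftrightarrow> subspace S \<and> (\<exists>B. finite B \<and> S = span B)"

end

theory Submission imports Defs begin

lemma L1:
  fixes F :: "'a::real_normed_vector \<Rightarrow> 'b::real_normed_vector"
  assumes "\<forall>w. (F has_derivative blinfun_apply (F1 w)) (at w)"
  shows "((\<lambda>s. F (a + s *\<^sub>R e)) has_vector_derivative (F1 (a + s *\<^sub>R e) e)) (at s)"
proof -
  have i: "((\<lambda>s::real. a + s *\<^sub>R e) has_derivative (\<lambda>h. h *\<^sub>R e)) (at s)"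
    by (auto intro!: derivative_eq_intros)
  have "((F \<circ> (\<lambda>s. a + s *\<^sub>R e)) has_derivative (blinfun_apply (F1 (a + s *\<^sub>R e)) \<circ> (\<lambda>h. h *\<^sub>R e))) (at s)"
    by (rule diff_chain_at[OF i]) (use assms in blast)
  then show ?thesis unfolding has_vector_derivative_def o_def
    by (simp add: blinfun.scaleR_right)
qed

lemma app:
  assumes "(G has_vector_derivative G') (at s)"
  shows "((\<lambda>s. blinfun_apply (G s) v) has_vector_derivative blinfun_apply G' v) (at s)"
  using blinfun.has_vector_derivative[OF assms, of "\<lambda>_. v" 0] by simp

lemma app2:
  assumes "(G has_vector_derivative G') (at s)"
  shows "((\<lambda>s. blinfun_apply (G s) (y + s *\<^sub>R e)) has_vector_derivative
     (blinfun_apply (G s) e + blinfun_apply G' (y + s *\<^sub>R e))) (at s)"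
proof -
  have "((\<lambda>s. y + s *\<^sub>R e) has_vector_derivative e) (at s)"
    by (auto intro!: derivative_eq_intros)
  from blinfun.has_vector_derivative[OF assms this] show ?thesis by simp
qed

lemma trap:
  fixes f fp fpp fppp :: "real \<Rightarrow> real"
  assumes "\<And>s. (f has_vector_derivative fp s) (at s)"
    "\<And>s. (fp has_vector_derivative fpp s) (at s)"
    "\<And>s. (fpp has_vector_derivative fppp s) (at s)"
  shows "f 1 - f 0 = (fp 0 + fp 1) / 2 + (1/2) * integral {0..1} (\<lambda>s. fppp s * (s * (s - 1)))"
proof -
  define G where "G s = fpp s * (s * (s - 1)) - fp s * (2 * s - 1) + 2 * f s" for s
  have "(G has_real_derivative fppp s * (s * (s - 1))) (at s)" for s
    unfolding G_def[abs_def]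
    by (rule derivative_eq_intros assms[folded has_real_derivative_iff_has_vector_derivative] refl | simp)+
  then have "((\<lambda>s. fppp s * (s * (s - 1))) has_integral (G 1 - G 0)) {0..1}"
    by (intro fundamental_theorem_of_calculus)
      (auto simp: has_real_derivative_iff_has_vector_derivative[symmetric] intro: has_field_derivative_at_within)
  then have "integral {0..1} (\<lambda>s. fppp s * (s * (s - 1))) = G 1 - G 0" by blast
  then show ?thesis unfolding G_def by (simp add: field_simps)
qed
theorem mainTheorem6:
  fixes A :: "'u::banach \<Rightarrow> ('v::banach \<Rightarrow>\<^sub>L real)"
    and A1 :: "'u \<Rightarrow> ('u \<Rightarrow>\<^sub>L 'v \<Rightarrow>\<^sub>L real)"
    and A2 :: "'u \<Rightarrow> ('u \<Rightarrow>\<^sub>L 'u \<Rightarrow>\<^sub>L 'v \<Rightarrow>\<^sub>L real)"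
    and A3 :: "'u \<Rightarrow> ('u \<Rightarrow>\<^sub>L 'u \<Rightarrow>\<^sub>L 'u \<Rightarrow>\<^sub>L 'v \<Rightarrow>\<^sub>L real)"
    and J :: "'u \<Rightarrow> real"
    and J1 :: "'u \<Rightarrow> ('u \<Rightarrow>\<^sub>L real)"
    and J2 :: "'u \<Rightarrow> ('u \<Rightarrow>\<^sub>L 'u \<Rightarrow>\<^sub>L real)"
    and J3 :: "'u \<Rightarrow> ('u \<Rightarrow>\<^sub>L 'u \<Rightarrow>\<^sub>L 'u \<Rightarrow>\<^sub>L real)"
    and u :: 'u and z :: 'v
    and Uh :: "'u set" and Vh :: "'v set"
    and uh :: 'u and zh :: 'v and ut :: 'u and zt :: 'v
    and eta :: real
  assumes A_C3: "C3_with_derivs A A1 A2 A3"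
    and J_C3: "C3_with_derivs J J1 J2 J3"
    and primal: "\<forall>v. A u v = 0"
    and dual: "\<forall>\<phi>. A1 u \<phi> z = J1 u \<phi>"
    and Uh_sub: "fin_dim_subspace Uh"
    and Vh_sub: "fin_dim_subspace Vh"
    and uh_in: "uh \<in> Uh"
    and primal_h: "\<forall>v\<in>Vh. A uh v = 0"
    and zh_in: "zh \<in> Vh"
    and dual_h: "\<forall>\<phi>\<in>Uh. A1 uh \<phi> zh = J1 uh \<phi>"
    and ut_in: "ut \<in> Uh"
    and zt_in: "zt \<in> Vh"
    and eta_def: "eta =
        (1/2) * (- A ut (zh - zt))
      + (1/2) * (J1 ut (uh - ut) - A1 ut (uh - ut) zt)
      + (- A ut zt)
      + (1/2) * integral {0..1} (\<lambda>s.
           (J3 (ut + s *\<^sub>R (uh - ut)) (uh - ut) (uh - ut) (uh - ut)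
            - A3 (ut + s *\<^sub>R (uh - ut)) (uh - ut) (uh - ut) (uh - ut) (zt + s *\<^sub>R (zh - zt))
            - 3 * A2 (ut + s *\<^sub>R (uh - ut)) (uh - ut) (uh - ut) (zh - zt)) * (s * (s - 1)))"
  shows "\<bar>J u - J ut\<bar> - \<bar>J u - J uh\<bar> \<le> \<bar>eta\<bar> \<and> \<bar>eta\<bar> \<le> \<bar>J u - J ut\<bar> + \<bar>J u - J uh\<bar>"
proof -
  have A0: "\<forall>w. (A has_derivative blinfun_apply (A1 w)) (at w)"
    "\<forall>w. (A1 has_derivative blinfun_apply (A2 w)) (at w)"
    "\<forall>w. (A2 has_derivative blinfun_apply (A3 w)) (at w)"
    using A_C3 unfolding C3_with_derivs_def by auto
  have J0: "\<forall>w. (J has_derivative blinfun_apply (J1 w)) (at w)"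
    "\<forall>w. (J1 has_derivative blinfun_apply (J2 w)) (at w)"
    "\<forall>w. (J2 has_derivative blinfun_apply (J3 w)) (at w)"
    using J_C3 unfolding C3_with_derivs_def by auto
  define eu where "eu = uh - ut"
  define ez where "ez = zh - zt"
  have eu_in: "eu \<in> Uh" using Uh_sub uh_in ut_in unfolding fin_dim_subspace_def eu_def
    by (simp add: subspace_diff)
  have ez_in: "ez \<in> Vh" using Vh_sub zh_in zt_in unfolding fin_dim_subspace_def ez_def
    by (simp add: subspace_diff)
  define f where "f s = J (ut + s *\<^sub>R eu) - A (ut + s *\<^sub>R eu) (zt + s *\<^sub>R ez)" for s :: real
  define fp where "fp s = J1 (ut + s *\<^sub>R eu) eu - (A (ut + s *\<^sub>R eu) ez + A1 (ut + s *\<^sub>R eu) eu (zt + s *\<^sub>R ez))" for s :: real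
  define fpp where "fpp s = J2 (ut + s *\<^sub>R eu) eu eu - (A1 (ut + s *\<^sub>R eu) eu ez + (A1 (ut + s *\<^sub>R eu) eu ez + A2 (ut + s *\<^sub>R eu) eu eu (zt + s *\<^sub>R ez)))" for s :: real
  define fppp where "fppp s = J3 (ut + s *\<^sub>R eu) eu eu eu - (A2 (ut + s *\<^sub>R eu) eu eu ez + (A2 (ut + s *\<^sub>R eu) eu eu ez + (A2 (ut + s *\<^sub>R eu) eu eu ez + A3 (ut + s *\<^sub>R eu) eu eu eu (zt + s *\<^sub>R ez))))" for s :: real
  have d1: "(f has_vector_derivative fp s) (at s)" for s
    unfolding f_def[abs_def] fp_def
    by (intro has_vector_derivative_diff L1 app2 J0 A0)
  have d2: "(fp has_vector_derivative fpp s) (at s)" for s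
    unfolding fp_def[abs_def] fpp_def
    by (intro has_vector_derivative_diff has_vector_derivative_add app L1 app2 J0 A0)
  have d3: "(fpp has_vector_derivative fppp s) (at s)" for s
    unfolding fpp_def[abs_def] fppp_def
    by (intro has_vector_derivative_diff has_vector_derivative_add app L1 app2 J0 A0)
  have T: "f 1 - f 0 = (fp 0 + fp 1) / 2 + (1/2) * integral {0..1} (\<lambda>s. fppp s * (s * (s - 1)))"
    by (rule trap[OF d1 d2 d3])
  have x1: "ut + 1 *\<^sub>R eu = uh" "zt + 1 *\<^sub>R ez = zh" unfolding eu_def ez_def by simp_all
  have f1: "f 1 = J uh" unfolding f_def x1 using primal_h zh_in by simp
  have f0: "f 0 = J ut - A ut zt" unfolding f_def by simp
  have fp1: "fp 1 = 0" unfolding fp_def x1 using primal_h ez_in dual_h eu_in by simp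
  have fp0: "fp 0 = J1 ut eu - A ut ez - A1 ut eu zt" unfolding fp_def by simp
  have I: "integral {0..1} (\<lambda>s. fppp s * (s * (s - 1))) = integral {0..1} (\<lambda>s.
           (J3 (ut + s *\<^sub>R (uh - ut)) (uh - ut) (uh - ut) (uh - ut)
            - A3 (ut + s *\<^sub>R (uh - ut)) (uh - ut) (uh - ut) (uh - ut) (zt + s *\<^sub>R (zh - zt))
            - 3 * A2 (ut + s *\<^sub>R (uh - ut)) (uh - ut) (uh - ut) (zh - zt)) * (s * (s - 1)))"
    unfolding fppp_def eu_def ez_def by (rule arg_cong[where f="integral _"], rule ext) (simp add: algebra_simps)
  define R where "R = integral {0..1} (\<lambda>s.
           (J3 (ut + s *\<^sub>R (uh - ut)) (uh - ut) (uh - ut) (uh - ut)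
            - A3 (ut + s *\<^sub>R (uh - ut)) (uh - ut) (uh - ut) (uh - ut) (zt + s *\<^sub>R (zh - zt))
            - 3 * A2 (ut + s *\<^sub>R (uh - ut)) (uh - ut) (uh - ut) (zh - zt)) * (s * (s - 1)))"
  have T': "J uh - (J ut - A ut zt) = (J1 ut eu - A ut ez - A1 ut eu zt) / 2 + (1/2) * R"
    using T unfolding f1 f0 fp1 fp0 I R_def[symmetric] by simp
  have E0: "eta = (1/2) * (- A ut ez) + (1/2) * (J1 ut eu - A1 ut eu zt) + (- A ut zt) + (1/2) * R"
    unfolding eta_def R_def eu_def ez_def ..
  have E: "eta = J uh - J ut"
    using T' E0 by (simp add: field_simps)
  show ?thesis unfolding E by linarith
qed

end
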